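(* Let $A$ be a unital power-associative algebra over a field of characteristic zero and let $R$ be a Rota–Baxter operator of nonzero weight $\lambda$ on $A$. If $R(1)$ is nilpotent, then $R(1)=0$ and $R$ is splitting.
   Context: A linear operator $R\colon A\to A$ is a Rota–Baxter operator of weight $\lambda$ if $R(x)R(y)=R(R(x)y+xR(y)+\lambda xy)$ for all $x,y\in A$. An algebra is power-associative if every element generates an associative subalgebra. An RB-operator $R$ of weight $\lambda$ is splitting if $A=A_1\oplus A_2$ as vector spaces for subalgebras $A_1,A_2$ and $R(a_1+a_2)=-\lambda a_2$ for $a_1\in A_1$, $a_2\in A_2$. *)

theory Defs
  imports Complex_Main
begin

definition bilinear_mul :: "('k::field \<Rightarrow> 'v::ab_group_add \<Rightarrow> 'v) \<Rightarrow> ('v \<Rightarrow> 'v \<Rightarrow> 'v) \<Rightarrow> bool" where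
  "bilinear_mul scale mul \<longleftrightarrow>
     (\<forall>x y z. mul (x + y) z = mul x z + mul y z) \<and>
     (\<forall>x y z. mul x (y + z) = mul x y + mul x z) \<and>
     (\<forall>a x y. mul (scale a x) y = scale a (mul x y)) \<and>
     (\<forall>a x y. mul x (scale a y) = scale a (mul x y))"

definition alg_unit :: "('v \<Rightarrow> 'v \<Rightarrow> 'v) \<Rightarrow> 'v \<Rightarrow> bool" where
  "alg_unit mul e \<longleftrightarrow> (\<forall>x. mul e x = x \<and> mul x e = x)"

definition subalg :: "('k::field \<Rightarrow> 'v::ab_group_add \<Rightarrow> 'v) \<Rightarrow> ('v \<Rightarrow> 'v \<Rightarrow> 'v) \<Rightarrow> 'v set \<Rightarrow> bool" where
  "subalg scale mul S \<longleftrightarrow> module.subspace scale S \<and> (\<forall>x\<in>S. \<forall>y\<in>S. mul x y \<in> S)"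

definition gen_subalg :: "('k::field \<Rightarrow> 'v::ab_group_add \<Rightarrow> 'v) \<Rightarrow> ('v \<Rightarrow> 'v \<Rightarrow> 'v) \<Rightarrow> 'v \<Rightarrow> 'v set" where
  "gen_subalg scale mul x = \<Inter>{S. subalg scale mul S \<and> x \<in> S}"

definition assoc_on :: "('v \<Rightarrow> 'v \<Rightarrow> 'v) \<Rightarrow> 'v set \<Rightarrow> bool" where
  "assoc_on mul S \<longleftrightarrow> (\<forall>a\<in>S. \<forall>b\<in>S. \<forall>c\<in>S. mul (mul a b) c = mul a (mul b c))"

definition power_assoc :: "('k::field \<Rightarrow> 'v::ab_group_add \<Rightarrow> 'v) \<Rightarrow> ('v \<Rightarrow> 'v \<Rightarrow> 'v) \<Rightarrow> bool" where
  "power_assoc scale mul \<longleftrightarrow> (\<forall>x. assoc_on mul (gen_subalg scale mul x))"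

text \<open>Positive powers x^n (n >= 1), well-defined in a power-associative algebra.\<close>
fun apow :: "('v \<Rightarrow> 'v \<Rightarrow> 'v) \<Rightarrow> 'v \<Rightarrow> nat \<Rightarrow> 'v" where
  "apow mul x 0 = x"   \<comment> \<open>unused convention; only n >= 1 matters\<close>
| "apow mul x (Suc 0) = x"
| "apow mul x (Suc (Suc n)) = mul x (apow mul x (Suc n))"

definition nilpotent_elt :: "('v::zero \<Rightarrow> 'v \<Rightarrow> 'v) \<Rightarrow> 'v \<Rightarrow> bool" where
  "nilpotent_elt mul x \<longleftrightarrow> (\<exists>n\<ge>1. apow mul x n = 0)"

definition rota_baxter :: "('k::field \<Rightarrow> 'v::ab_group_add \<Rightarrow> 'v) \<Rightarrow> ('v \<Rightarrow> 'v \<Rightarrow> 'v) \<Rightarrow> 'k \<Rightarrow> ('v \<Rightarrow> 'v) \<Rightarrow> bool" where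
  "rota_baxter scale mul lam R \<longleftrightarrow> Vector_Spaces.linear scale scale R \<and>
     (\<forall>x y. mul (R x) (R y) = R (mul (R x) y + mul x (R y) + scale lam (mul x y)))"

definition splitting_rb :: "('k::field \<Rightarrow> 'v::ab_group_add \<Rightarrow> 'v) \<Rightarrow> ('v \<Rightarrow> 'v \<Rightarrow> 'v) \<Rightarrow> 'k \<Rightarrow> ('v \<Rightarrow> 'v) \<Rightarrow> bool" where
  "splitting_rb scale mul lam R \<longleftrightarrow> (\<exists>A1 A2. subalg scale mul A1 \<and> subalg scale mul A2 \<and>
      A1 \<inter> A2 = {0} \<and> (\<forall>v. \<exists>a1\<in>A1. \<exists>a2\<in>A2. v = a1 + a2) \<and>
      (\<forall>a1\<in>A1. \<forall>a2\<in>A2. R (a1 + a2) = scale (- lam) a2))"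

end

theory Submission
  imports Defs "HOL-Computational_Algebra.Polynomial"
begin


definition dprop :: "'k::field_char_0 poly \<Rightarrow> 'k poly \<Rightarrow> bool" where
  "dprop p q \<longleftrightarrow> poly q 0 = 0 \<and> (\<forall>x. poly q x - poly q (x - 1) = poly p x)"

definition cz :: "nat \<Rightarrow> 'k::zero poly \<Rightarrow> bool" where
  "cz k p \<longleftrightarrow> (\<forall>i>k. coeff p i = 0)"

lemma dprop_uniq:
  fixes p q1 q2 :: "'k::field_char_0 poly"
  assumes "dprop p q1" "dprop p q2" shows "q1 = q2"
proof (rule ccontr)
  define r where "r = q1 - q2"
  assume "q1 \<noteq> q2"
  hence "r \<noteq> 0" by (simp add: r_def)
  have r0: "poly r 0 = 0" using assms by (simp add: dprop_def r_def)
  have rs: "poly r x = poly r (x - 1)" for x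
  proof -
    have "poly q1 x - poly q1 (x - 1) = poly p x" "poly q2 x - poly q2 (x - 1) = poly p x"
      using assms by (simp_all add: dprop_def)
    moreover have "poly r x - poly r (x - 1) = (poly q1 x - poly q1 (x - 1)) - (poly q2 x - poly q2 (x - 1))"
      by (simp add: r_def algebra_simps)
    ultimately have "poly r x - poly r (x - 1) = 0" by simp
    then show ?thesis by simp
  qed
  have "poly r (of_nat n) = 0" for n
  proof (induction n)
    case 0 then show ?case using r0 by simp
  next
    case (Suc n)
    have "poly r (of_nat (Suc n)) = poly r (of_nat (Suc n) - 1)" by (rule rs)
    also have "of_nat (Suc n) - 1 = (of_nat n :: 'k)" by simp
    finally show ?case using Suc by simp
  qed
  hence "range (of_nat :: nat \<Rightarrow> 'k) \<subseteq> {x. poly r x = 0}" by auto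
  moreover have "infinite (range (of_nat :: nat \<Rightarrow> 'k))"
    by (rule range_inj_infinite) (simp add: inj_on_def)
  ultimately show False using poly_roots_finite[OF \<open>r \<noteq> 0\<close>] finite_subset by blast
qed

lemma binom_diff:
  "\<exists>r. cz k r \<and> (\<forall>i. k \<le> i \<longrightarrow> coeff r i = 0) \<and>
     (\<forall>x::'k::field_char_0. x ^ Suc k - (x - 1) ^ Suc k = of_nat (Suc k) * x ^ k + poly r x)"
proof -
  define t where "t = (\<lambda>j. of_nat (Suc k choose j) * (-1::'k) ^ (Suc k - j))"
  define r where "r = (\<Sum>j<k. monom (- t j) j)"
  have c: "coeff r i = 0" if "k \<le> i" for i
    using that by (simp add: r_def coeff_sum coeff_monom)
  have "x ^ Suc k - (x - 1) ^ Suc k = of_nat (Suc k) * x ^ k + poly r x" for x :: 'k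
  proof -
    have "(x - 1) ^ Suc k = (x + (-1)) ^ Suc k" by simp
    also have "\<dots> = (\<Sum>j\<le>Suc k. of_nat (Suc k choose j) * x ^ j * (-1) ^ (Suc k - j))"
      by (rule binomial_ring)
    also have "\<dots> = (\<Sum>j<k. t j * x ^ j) + t k * x ^ k + t (Suc k) * x ^ Suc k"
      by (simp add: lessThan_Suc_atMost[symmetric] t_def algebra_simps)
    also have "t (Suc k) = 1" by (simp add: t_def)
    also have "t k = - of_nat (Suc k)" by (simp add: t_def)
    finally have e: "(x - 1) ^ Suc k = (\<Sum>j<k. t j * x ^ j) - of_nat (Suc k) * x ^ k + x ^ Suc k"
      by (simp add: algebra_simps)
    have "poly r x = - (\<Sum>j<k. t j * x ^ j)"
      by (simp add: r_def poly_sum poly_monom sum_negf)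
    then show ?thesis using e by simp
  qed
  moreover have "cz k r" using c by (simp add: cz_def)
  ultimately show ?thesis using c by blast
qed

lemma cz0_poly: assumes "cz 0 p" shows "poly p x = coeff p 0"
proof -
  have "degree p = 0" using assms degree_le[of 0 p] by (simp add: cz_def)
  then obtain a where "p = [:a:]" using degree0_coeffs by blast
  then show ?thesis by simp
qed

lemma dprop_exists:
  "cz k (p::'k::field_char_0 poly) \<Longrightarrow> \<exists>q. dprop p q \<and> cz (Suc k) q \<and> coeff q (Suc k) = coeff p k / of_nat (Suc k)"
proof (induction k arbitrary: p)
  case 0
  define c where "c = coeff p 0"
  have "dprop p [:0, c:]" using cz0_poly[OF 0] by (simp add: dprop_def c_def algebra_simps)
  moreover have "cz (Suc 0) [:0, c:]" by (auto simp: cz_def coeff_pCons split: nat.split)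
  ultimately show ?case by (auto simp: c_def)
next
  case (Suc k)
  define c where "c = coeff p (Suc k)"
  obtain r where r': "cz (Suc k) r" "\<forall>i. Suc k \<le> i \<longrightarrow> coeff r i = 0"
    "\<forall>x::'k. x ^ Suc (Suc k) - (x - 1) ^ Suc (Suc k) = of_nat (Suc (Suc k)) * x ^ Suc k + poly r x"
    using binom_diff[of "Suc k"] by (elim exE conjE)
  have r: "cz k r" "\<forall>i. Suc k \<le> i \<longrightarrow> coeff r i = 0"
    "\<forall>x::'k. x ^ Suc (Suc k) - (x - 1) ^ Suc (Suc k) = of_nat (Suc (Suc k)) * x ^ Suc k + poly r x"
    using r' by (auto simp: cz_def Suc_le_eq)
  define d where "d = c / of_nat (Suc (Suc k))"
  define p' where "p' = p - monom c (Suc k) - smult d r"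
  have "cz k p'"
    unfolding cz_def
  proof (intro allI impI)
    fix i assume "k < i"
    then show "coeff p' i = 0" using Suc.prems r(2)
      by (cases "i = Suc k") (auto simp: p'_def c_def cz_def)
  qed
  from Suc.IH[OF this] obtain q' where q': "dprop p' q'" "cz (Suc k) q'" by blast
  define q where "q = monom d (Suc (Suc k)) + q'"
  have nz: "(of_nat (Suc (Suc k)) :: 'k) \<noteq> 0" by (rule of_nat_neq_0)
  have "dprop p q"
    unfolding dprop_def
  proof (intro conjI allI)
    show "poly q 0 = 0" using q'(1) by (simp add: q_def dprop_def poly_monom)
    fix x :: 'k
    have h: "poly q' x - poly q' (x - 1) = poly p' x" using q'(1) by (simp add: dprop_def)
    have "poly q x - poly q (x - 1) = d * (x ^ Suc (Suc k) - (x - 1) ^ Suc (Suc k)) + (poly q' x - poly q' (x - 1))"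
      unfolding q_def poly_add poly_monom by (simp add: right_diff_distrib)
    also have "\<dots> = d * (x ^ Suc (Suc k) - (x - 1) ^ Suc (Suc k)) + poly p' x" by (simp only: h)
    also have "\<dots> = d * (of_nat (Suc (Suc k)) * x ^ Suc k + poly r x) + poly p' x"
      using r(3) by simp
    also have "\<dots> = (d * of_nat (Suc (Suc k))) * x ^ Suc k + d * poly r x + poly p' x"
      by (simp add: distrib_left mult.assoc)
    also have "d * of_nat (Suc (Suc k)) = c" using nz by (simp add: d_def)
    also have "poly p' x = poly p x - c * x ^ Suc k - d * poly r x" by (simp add: p'_def poly_monom)
    also have "c * x ^ Suc k + d * poly r x + (poly p x - c * x ^ Suc k - d * poly r x) = poly p x"
      by simp
    finally show "poly q x - poly q (x - 1) = poly p x" .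
  qed
  moreover have "cz (Suc (Suc k)) q" using q'(2) by (simp add: cz_def q_def)
  moreover have "coeff q (Suc (Suc k)) = coeff p (Suc k) / of_nat (Suc (Suc k))"
    using q'(2) by (simp add: cz_def q_def d_def c_def)
  ultimately show ?case by blast
qed

definition S :: "'k::field_char_0 poly \<Rightarrow> 'k poly" where
  "S p = (THE q. dprop p q)"

lemma cz_degree: "cz (degree p) p"
  by (simp add: cz_def coeff_eq_0)

lemma S_prop: "dprop p (S p)"
proof -
  obtain q where "dprop p q" using dprop_exists[OF cz_degree[of p]] by (elim exE conjE)
  then show ?thesis unfolding S_def by (rule theI[of _ q]) (use dprop_uniq \<open>dprop p q\<close> in blast)+
qed

lemma S_eq: "dprop p q \<Longrightarrow> S p = q"
  by (rule dprop_uniq[OF S_prop])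

lemma S_cz: assumes "cz k p" shows "cz (Suc k) (S p) \<and> coeff (S p) (Suc k) = coeff p k / of_nat (Suc k)"
proof -
  obtain q where q: "dprop p q" "cz (Suc k) q" "coeff q (Suc k) = coeff p k / of_nat (Suc k)"
    using dprop_exists[OF assms] by (elim exE conjE)
  have "S p = q" by (rule S_eq[OF q(1)])
  then show ?thesis using q by simp
qed

lemma S_step: "poly (S p) x - poly (S p) (x - 1) = poly p x"
  using S_prop[of p] by (simp add: dprop_def)

lemma S_at0: "poly (S p) 0 = 0"
  using S_prop[of p] by (simp add: dprop_def)

lemma S_add: "S (p + q) = S p + S q"
proof (rule S_eq)
  show "dprop (p + q) (S p + S q)"
    unfolding dprop_def
  proof (intro conjI allI)
    show "poly (S p + S q) 0 = 0" by (simp only: poly_add S_at0) simp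
    fix x
    show "poly (S p + S q) x - poly (S p + S q) (x - 1) = poly (p + q) x"
      by (simp only: poly_add add_diff_add S_step)
  qed
qed

lemma S_smult: "S (smult c p) = smult c (S p)"
proof (rule S_eq)
  show "dprop (smult c p) (smult c (S p))"
    unfolding dprop_def
  proof (intro conjI allI)
    show "poly (smult c (S p)) 0 = 0" by (simp only: poly_smult S_at0) simp
    fix x
    show "poly (smult c (S p)) x - poly (smult c (S p)) (x - 1) = poly (smult c p) x"
      by (simp only: poly_smult right_diff_distrib[symmetric] S_step)
  qed
qed

lemma S_zero: "S 0 = 0"
  using S_smult[of 0 0] by simp

lemma S_diff: "S (p - q) = S p - S q"
proof -
  have "S p = S (p - q) + S q" using S_add[of "p - q" q] by (simp only: diff_add_cancel)
  from arg_cong[OF this, of "\<lambda>y. y - S q"] show ?thesis by simp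
qed

lemma S_sum: "S (\<Sum>j\<in>A. f j) = (\<Sum>j\<in>A. S (f j))"
  by (induction A rule: infinite_finite_induct) (simp_all add: S_zero S_add)

lemma S_ident: "S (S p - p) = pCons 0 (S p) - S (pCons 0 p)"
proof (rule S_eq)
  have a: "poly (S p) (x - 1) = poly (S p) x - poly p x" for x
  proof -
    have h: "poly (S p) x - poly (S p) (x - 1) = poly p x" using S_prop[of p] by (simp add: dprop_def)
    show ?thesis by (simp add: h[symmetric])
  qed
  have b: "poly (S (pCons 0 p)) (x - 1) = poly (S (pCons 0 p)) x - x * poly p x" for x
  proof -
    have h: "poly (S (pCons 0 p)) x - poly (S (pCons 0 p)) (x - 1) = x * poly p x"
      using S_prop[of "pCons 0 p"] by (simp add: dprop_def)
    show ?thesis by (simp add: h[symmetric])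
  qed
  show "dprop (S p - p) (pCons 0 (S p) - S (pCons 0 p))"
    using S_prop[of "pCons 0 p"] unfolding dprop_def
    by (simp add: a b algebra_simps)
qed

lemma S_one: "S 1 = pCons 0 1"
  by (rule S_eq) (simp add: dprop_def)

lemma poly_sum_bound: fixes q :: "'k::field_char_0 poly" assumes "degree q \<le> n" shows "poly q x = (\<Sum>i\<le>n. coeff q i * x ^ i)"
proof -
  have "poly q x = poly (\<Sum>i\<le>n. monom (coeff q i) i) x" using poly_as_sum_of_monoms'[OF assms] by simp
  also have "\<dots> = (\<Sum>i\<le>n. coeff q i * x ^ i)" by (simp add: poly_sum poly_monom)
  finally show ?thesis .
qed



locale rbsetup = V: vector_space scale
  for scale :: "'k::field_char_0 \<Rightarrow> 'v::ab_group_add \<Rightarrow> 'v" +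
  fixes mul :: "'v \<Rightarrow> 'v \<Rightarrow> 'v" and one :: 'v and P :: "'v \<Rightarrow> 'v" and u :: 'v
  assumes bil: "bilinear_mul scale mul" and unit: "alg_unit mul one"
    and P_add: "P (x + y) = P x + P y" and P_scale: "P (scale c x) = scale c (P x)"
    and Pone: "P one = u"
    and rel: "mul u (P y) = P (mul u y) + P (P y) - P y"
begin

lemma mh: "module_hom scale scale P"
  by (simp add: module_hom_def module_hom_axioms_def V.module_axioms P_add P_scale)

lemmas P_sum = module_hom.sum[OF mh] and P_zero = module_hom.zero[OF mh]
  and P_diff = module_hom.diff[OF mh]

lemma mul_addR: "mul x (y + z) = mul x y + mul x z"
  using bil by (simp add: bilinear_mul_def)
lemma mul_scaleR: "mul x (scale c y) = scale c (mul x y)"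
  using bil by (simp add: bilinear_mul_def)

lemma mh_mul: "module_hom scale scale (mul x)"
  by (simp add: module_hom_def module_hom_axioms_def V.module_axioms mul_addR mul_scaleR)

lemma mul_sumR: "mul x (sum f A) = (\<Sum>a\<in>A. mul x (f a))"
  by (rule module_hom.sum[OF mh_mul])
lemma mul_zeroR: "mul x 0 = 0"
  by (rule module_hom.zero[OF mh_mul])

definition U :: "nat \<Rightarrow> 'v" where
  "U k = (if k = 0 then one else apow mul u k)"

lemma U_0: "U 0 = one" by (simp add: U_def)

lemma U_Suc: "U (Suc k) = mul u (U k)"
  using unit by (cases k) (simp_all add: U_def alg_unit_def)

definition pi :: "'k poly \<Rightarrow> 'v" where
  "pi p = (\<Sum>i<Suc (degree p). scale (coeff p i) (U i))"

lemma pi_bound: assumes "degree p < n" shows "pi p = (\<Sum>i<n. scale (coeff p i) (U i))"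
  unfolding pi_def
proof (rule sum.mono_neutral_left)
  show "\<forall>i\<in>{..<n} - {..<Suc (degree p)}. scale (coeff p i) (U i) = 0"
    by (auto simp: coeff_eq_0)
qed (use assms in auto)

lemma pi_add: "pi (p + q) = pi p + pi q"
proof -
  define n where "n = Suc (degree p + degree q)"
  have d1: "degree (p + q) < n" unfolding n_def using degree_add_le_max[of p q] by simp
  have d2: "degree p < n" "degree q < n" by (simp_all add: n_def)
  have "pi (p + q) = (\<Sum>i<n. scale (coeff (p + q) i) (U i))" by (rule pi_bound[OF d1])
  also have "\<dots> = (\<Sum>i<n. scale (coeff p i) (U i) + scale (coeff q i) (U i))"
    by (rule sum.cong) (simp_all add: V.scale_left_distrib)
  also have "\<dots> = pi p + pi q"
    by (simp only: sum.distrib pi_bound[OF d2(1)] pi_bound[OF d2(2)])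
  finally show ?thesis .
qed

lemma pi_smult: "pi (smult c p) = scale c (pi p)"
proof -
  have d: "degree (smult c p) < Suc (degree p)" by (simp add: le_imp_less_Suc)
  have "pi (smult c p) = (\<Sum>i<Suc (degree p). scale (coeff (smult c p) i) (U i))" by (rule pi_bound[OF d])
  also have "\<dots> = (\<Sum>i<Suc (degree p). scale c (scale (coeff p i) (U i)))"
    by (rule sum.cong) simp_all
  also have "\<dots> = scale c (pi p)"
    by (simp only: pi_def V.scale_sum_right)
  finally show ?thesis .
qed

lemma pi_zero: "pi 0 = 0"
  using pi_smult[of 0 0] by simp

lemma pi_diff: "pi (p - q) = pi p - pi q"
proof -
  have "pi p = pi (p - q) + pi q" using pi_add[of "p - q" q] by (simp only: diff_add_cancel)
  from arg_cong[OF this, of "\<lambda>y. y - pi q"] show ?thesis by simp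
qed

lemma pi_sum: "pi (\<Sum>j\<in>A. f j) = (\<Sum>j\<in>A. pi (f j))"
  by (induction A rule: infinite_finite_induct) (simp_all add: pi_zero pi_add)

lemma pi_X: "pi (pCons 0 p) = mul u (pi p)"
proof -
  have d: "degree (pCons 0 p) < Suc (Suc (degree p))"
    using degree_pCons_le[of 0 p] by simp
  have "pi (pCons 0 p) = (\<Sum>i<Suc (Suc (degree p)). scale (coeff (pCons 0 p) i) (U i))"
    by (rule pi_bound[OF d])
  also have "\<dots> = (\<Sum>i<Suc (degree p). scale (coeff p i) (U (Suc i)))"
    by (simp only: sum.lessThan_Suc_shift) simp
  also have "\<dots> = (\<Sum>i<Suc (degree p). mul u (scale (coeff p i) (U i)))"
    by (rule sum.cong) (simp_all add: mul_scaleR U_Suc)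
  also have "\<dots> = mul u (pi p)"
    by (simp only: pi_def mul_sumR)
  finally show ?thesis .
qed

lemma pi_monom: "pi (monom 1 k) = U k"
proof -
  have "pi (monom 1 k) = (\<Sum>i<Suc k. scale (coeff (monom 1 k) i) (U i))"
    by (rule pi_bound) (simp add: degree_monom_eq)
  also have "\<dots> = (\<Sum>i<Suc k. if i = k then U i else 0)"
    by (rule sum.cong) (auto simp: coeff_monom)
  also have "\<dots> = U k" by simp
  finally show ?thesis .
qed

lemma cz_monom: "cz k (monom (1::'k) k)"
  by (simp add: cz_def coeff_monom)

lemma one_plus_inv_nz: "1 + 1 / of_nat (Suc k) \<noteq> (0::'k)"
proof
  assume h: "1 + 1 / of_nat (Suc k) = (0::'k)"
  have nz: "(of_nat (Suc k)::'k) \<noteq> 0" by (rule of_nat_neq_0)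
  from h have "of_nat (Suc k) + 1 = (0::'k)" using nz by (simp add: field_simps)
  then have "(of_nat (Suc (Suc k))::'k) = 0" by simp
  then show False by (simp only: of_nat_eq_0_iff)
qed

lemma main_ind: "P (U k) = pi (S (monom 1 k))"
proof (induction k rule: less_induct)
  case (less k)
  show ?case
  proof (cases k)
    case 0
    have m1: "monom 1 0 = (1::'k poly)" by simp
    have "pi (S (monom 1 0)) = mul u (pi (monom 1 0))"
      by (simp only: m1 S_one pi_X)
    also have "\<dots> = u" by (simp only: pi_monom U_0 unit[unfolded alg_unit_def])
    finally show ?thesis using 0 by (simp add: U_0 Pone)
  next
    case (Suc m)
    have IH: "P (U j) = pi (S (monom 1 j))" if "j \<le> m" for j
      using less Suc that by simp
    define q :: "'k poly" where "q = S (monom 1 m)"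
    define c where "c = coeff q (Suc m)"
    have czq: "cz (Suc m) q" and cq: "c = 1 / of_nat (Suc m)"
      using S_cz[OF cz_monom[of m]] by (simp_all add: q_def c_def)
    have dq: "degree q \<le> Suc m" using czq degree_le by (simp add: cz_def)
    have qexp: "q = (\<Sum>j\<le>Suc m. monom (coeff q j) j)"
      using poly_as_sum_of_monoms'[OF dq] by simp
    define w where "w = P (U m)"
    define A where "A = P (U (Suc m))"
    define B where "B = pi (S (monom 1 (Suc m)))"
    define \<Sigma> where "\<Sigma> = (\<Sum>j\<le>m. scale (coeff q j) (pi (S (monom 1 j))))"
    have w: "w = pi q" using IH[of m] by (simp add: w_def q_def)
    have piq: "pi q = (\<Sum>j\<le>Suc m. scale (coeff q j) (U j))"
      using pi_bound[of q "Suc (Suc m)"] dq by (simp add: lessThan_Suc_atMost)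
    have PP: "P w = \<Sigma> + scale c A"
    proof -
      have "P w = (\<Sum>j\<le>Suc m. scale (coeff q j) (P (U j)))"
        by (simp only: w piq P_sum P_scale)
      also have "\<dots> = (\<Sum>j\<le>m. scale (coeff q j) (P (U j))) + scale c A"
        by (simp add: A_def c_def)
      also have "(\<Sum>j\<le>m. scale (coeff q j) (P (U j))) = \<Sigma>"
        unfolding \<Sigma>_def by (rule sum.cong) (simp_all add: IH)
      finally show ?thesis .
    qed
    have relw: "mul u w = A + P w - w"
      using rel[of "U m"] by (simp add: w_def A_def U_Suc)
    have Sq: "S q = (\<Sum>j\<le>Suc m. smult (coeff q j) (S (monom 1 j)))"
    proof -
      have "S q = S (\<Sum>j\<le>Suc m. monom (coeff q j) j)" by (subst qexp) (rule refl)
      also have "\<dots> = (\<Sum>j\<le>Suc m. S (monom (coeff q j) j))" by (rule S_sum)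
      also have "\<dots> = (\<Sum>j\<le>Suc m. smult (coeff q j) (S (monom 1 j)))"
      proof (rule sum.cong)
        fix j
        have "monom (coeff q j) j = smult (coeff q j) (monom 1 j)" by (simp add: smult_monom)
        then show "S (monom (coeff q j) j) = smult (coeff q j) (S (monom 1 j))" by (simp only: S_smult)
      qed (rule refl)
      finally show ?thesis .
    qed
    have piSq: "pi (S q) = \<Sigma> + scale c B"
    proof -
      have "pi (S q) = (\<Sum>j\<le>Suc m. scale (coeff q j) (pi (S (monom 1 j))))"
        by (simp only: Sq pi_sum pi_smult)
      also have "\<dots> = \<Sigma> + scale c B" by (simp add: \<Sigma>_def B_def c_def)
      finally show ?thesis .
    qed
    have "S q - q = pCons 0 q - S (monom 1 (Suc m))"
      using S_ident[of "monom 1 m"] by (simp add: q_def S_diff monom_Suc)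
    then have "S (monom 1 (Suc m)) = pCons 0 q - S q + q" by (simp add: algebra_simps)
    then have Bexp: "B = mul u w - pi (S q) + w"
      by (simp add: B_def pi_add pi_diff pi_X w)
    have "A + scale c A = B + scale c B"
      using Bexp relw PP piSq by (simp add: algebra_simps)
    then have "scale (1 + c) A = scale (1 + c) B"
      by (simp add: V.scale_left_distrib)
    then have "A = B" using one_plus_inv_nz[of m] cq by simp
    then show ?thesis by (simp add: A_def B_def Suc)
  qed
qed

lemma Lpow_U: "(mul u ^^ j) (U i) = U (i + j)"
  by (induction j) (simp_all add: U_Suc)

lemma Lpow_lin: "(mul u ^^ j) (\<Sum>i\<in>A. scale (c i) (v i)) = (\<Sum>i\<in>A. scale (c i) ((mul u ^^ j) (v i)))"
  by (induction j) (simp_all add: mul_sumR mul_scaleR)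

lemma Lpow_zero: "(mul u ^^ j) 0 = 0"
  by (induction j) (simp_all add: mul_zeroR)

lemma U_high: assumes "U M = 0" "M \<le> n" shows "U n = 0"
proof -
  have "U (M + d) = 0" for d by (induction d) (simp_all add: assms U_Suc mul_zeroR)
  then show ?thesis using assms(2) by (metis le_add_diff_inverse)
qed

lemma indep:
  assumes UM: "U M = 0" and UM1: "U (M - 1) \<noteq> 0" and M1: "1 \<le> M"
    and sum0: "(\<Sum>i<M. scale (c i) (U i)) = 0"
  shows "\<forall>i<M. c i = 0"
proof (rule ccontr)
  assume "\<not> (\<forall>i<M. c i = 0)"
  then have ex: "\<exists>i. i < M \<and> c i \<noteq> 0" by auto
  define m where "m = (LEAST i. i < M \<and> c i \<noteq> 0)"
  have m: "m < M" "c m \<noteq> 0" using LeastI_ex[OF ex] by (simp_all add: m_def)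
  have low: "c i = 0" if "i < m" for i
    using not_less_Least[OF that[unfolded m_def]] m(1) that by auto
  define j where "j = M - 1 - m"
  have "(\<Sum>i<M. scale (c i) (U (i + j))) = 0"
    using arg_cong[OF sum0, of "mul u ^^ j"] by (simp add: Lpow_lin Lpow_U Lpow_zero)
  moreover have "(\<Sum>i<M. scale (c i) (U (i + j))) = (\<Sum>i<M. if i = m then scale (c m) (U (M - 1)) else 0)"
  proof (rule sum.cong)
    fix i assume "i \<in> {..<M}"
    show "scale (c i) (U (i + j)) = (if i = m then scale (c m) (U (M - 1)) else 0)"
    proof (cases "i = m")
      case True then show ?thesis using m(1) by (simp add: j_def)
    next
      case False
      show ?thesis
      proof (cases "i < m")
        case True then show ?thesis using low False by simp
      next
        case False2: False
        then have "M \<le> i + j" using \<open>i \<noteq> m\<close> m(1) by (simp add: j_def)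
        then show ?thesis using U_high[OF UM] False by simp
      qed
    qed
  qed simp
  ultimately have "scale (c m) (U (M - 1)) = 0" using m(1) by simp
  then show False using m(2) UM1 by simp
qed

lemma nil_zero: assumes N: "1 \<le> N" "apow mul u N = 0" shows "u = 0"
proof (rule ccontr)
  assume u0: "u \<noteq> 0"
  have ex: "\<exists>n. 1 \<le> n \<and> apow mul u n = 0" using N by blast
  define M where "M = (LEAST n. 1 \<le> n \<and> apow mul u n = 0)"
  have M: "1 \<le> M" "apow mul u M = 0" using LeastI_ex[OF ex] by (simp_all add: M_def)
  have "M \<noteq> 1" using M u0 by auto
  then have M2: "2 \<le> M" using M by simp
  have UM: "U M = 0" using M by (simp add: U_def)
  have "apow mul u (M - 1) \<noteq> 0"
  proof
    assume "apow mul u (M - 1) = 0"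
    moreover have lq: "\<And>n. 1 \<le> n \<and> apow mul u n = 0 \<Longrightarrow> M \<le> n"
      unfolding M_def by (rule Least_le)
    ultimately have "M \<le> M - 1" using M2 by simp
    then show False using M2 by simp
  qed
  then have UM1: "U (M - 1) \<noteq> 0" using M2 by (simp add: U_def)
  define q :: "'k poly" where "q = S (monom 1 M)"
  define a where "a = coeff q (Suc M)"
  define b where "b = coeff q M"
  have czq: "cz (Suc M) q" and ca: "a = 1 / of_nat (Suc M)"
    using S_cz[OF cz_monom[of M]] by (simp_all add: q_def a_def)
  have dq: "degree q \<le> Suc M" using czq degree_le by (simp add: cz_def)
  have "pi q = 0" using main_ind[of M] UM by (simp add: q_def P_zero)
  moreover have "pi q = (\<Sum>i<Suc (Suc M). scale (coeff q i) (U i))"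
    using pi_bound[of q "Suc (Suc M)"] dq by simp
  moreover have "(\<Sum>i<Suc (Suc M). scale (coeff q i) (U i)) = (\<Sum>i<M. scale (coeff q i) (U i))"
    using U_high[OF UM, of "Suc M"] UM by simp
  ultimately have "(\<Sum>i<M. scale (coeff q i) (U i)) = 0" by simp
  from indep[OF UM UM1 _ this] M have low: "\<forall>i<M. coeff q i = 0" by simp
  have pq: "poly q x = b * x ^ M + a * x ^ Suc M" for x
  proof -
    have "poly q x = (\<Sum>i\<le>Suc M. coeff q i * x ^ i)" by (rule poly_sum_bound[OF dq])
    also have "\<dots> = (\<Sum>i<M. coeff q i * x ^ i) + b * x ^ M + a * x ^ Suc M"
      by (simp add: a_def b_def lessThan_Suc_atMost[symmetric])
    also have "(\<Sum>i<M. coeff q i * x ^ i) = 0" using low by simp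
    finally show ?thesis by simp
  qed
  have dp: "dprop (monom 1 M) q" using S_prop by (simp add: q_def)
  have st: "poly q x - poly q (x - 1) = x ^ M" for x
    using dp unfolding dprop_def by (simp add: poly_monom)
  have e0: "poly q 0 - poly q (0 - 1) = 0" using st[of 0] M(1) by simp
  have e1: "poly q 1 - poly q (1 - 1) = 1" using st[of 1] by simp
  have q0: "poly q 0 = 0" by (simp add: q_def S_at0)
  have qm1: "poly q (-1) = 0" using e0 q0 by simp
  have "b * (-1) ^ M + a * (-1) ^ Suc M = 0" using qm1 pq[of "-1"] by simp
  then have "(-1) ^ M * (b - a) = 0" by (simp add: algebra_simps)
  then have "b = a" by simp
  have "poly q 1 = 1" using e1 q0 by simp
  with \<open>b = a\<close> have "a + a = 1" using pq[of 1] by simp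
  with ca have "(of_nat (Suc M)::'k) = of_nat 2"
    by (simp add: field_simps)
  then have "Suc M = 2" by (simp only: of_nat_eq_iff)
  then show False using M2 by simp
qed

end

lemma apow_scale:
  assumes "vector_space scale" "bilinear_mul scale mul"
  shows "apow mul (scale c a) (Suc n) = scale (c ^ Suc n) (apow mul a (Suc n))"
proof (induction n)
  case 0 then show ?case by simp
next
  case (Suc n)
  interpret V: vector_space scale by fact
  show ?case using Suc assms(2) by (simp add: bilinear_mul_def mult.commute)
qed

theorem lemma3:
  fixes scale :: "'k::field_char_0 \<Rightarrow> 'v::ab_group_add \<Rightarrow> 'v"
    and mul :: "'v \<Rightarrow> 'v \<Rightarrow> 'v" and one :: 'v
    and lam :: 'k and R :: "'v \<Rightarrow> 'v"
  assumes "vector_space scale"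
    and "bilinear_mul scale mul"
    and "alg_unit mul one"
    and "power_assoc scale mul"
    and "rota_baxter scale mul lam R"
    and "lam \<noteq> 0"
    and "nilpotent_elt mul (R one)"
  shows "R one = 0 \<and> splitting_rb scale mul lam R"
proof -
  interpret V: vector_space scale by fact
  have mhR: "module_hom scale scale R"
    using assms(5) module_hom_iff_linear by (auto simp: rota_baxter_def)
  have R_add: "R (x + y) = R x + R y" for x y by (rule module_hom.add[OF mhR])
  have R_scale: "R (scale c x) = scale c (R x)" for c x by (rule module_hom.scale[OF mhR])
  have R_zero: "R 0 = 0" by (rule module_hom.zero[OF mhR])
  have R_neg: "R (- x) = - R x" for x by (rule module_hom.neg[OF mhR])
  have RB: "mul (R x) (R y) = R (mul (R x) y + mul x (R y) + scale lam (mul x y))" for x y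
    using assms(5) by (simp add: rota_baxter_def)
  have mL: "mul (scale c x) y = scale c (mul x y)" for c x y using assms(2) by (simp add: bilinear_mul_def)
  have mR: "mul x (scale c y) = scale c (mul x y)" for c x y using assms(2) by (simp add: bilinear_mul_def)
  have mAL: "mul (x + y) z = mul x z + mul y z" for x y z using assms(2) by (simp add: bilinear_mul_def)
  have mAR: "mul x (y + z) = mul x y + mul x z" for x y z using assms(2) by (simp add: bilinear_mul_def)
  have m0R: "mul x 0 = 0" for x using mR[of x 0 0] by simp
  have mNL: "mul (- x) y = - mul x y" for x y using mL[of "-1" x y] by simp
  have mNR: "mul x (- y) = - mul x y" for x y using mR[of x "-1" y] by simp
  have m0L: "mul 0 x = 0" for x using mL[of 0 0 x] by simp
  have un: "mul one x = x" "mul x one = x" for x using assms(3) by (simp_all add: alg_unit_def)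
  define il where "il = inverse lam"
  have il: "il * lam = 1" using assms(6) by (simp add: il_def)
  define a where "a = R one"
  define P where "P = (\<lambda>y. scale (- il) (R y))"
  define u where "u = P one"
  have relP: "mul u (P y) = P (mul u y) + P (P y) - P y" for y
  proof -
    have "mul u (P y) = scale (il * il) (mul a (R y))"
      by (simp add: u_def P_def a_def mL mR del: V.scale_minus_left)
    also have "mul a (R y) = R (mul a y) + R (R y) + scale lam (R y)"
      using RB[of one y] by (simp add: a_def un R_add R_scale)
    also have "scale (il * il) (R (mul a y) + R (R y) + scale lam (R y))
       = scale (il * il) (R (mul a y)) + scale (il * il) (R (R y)) + scale il (R y)"
      by (simp add: V.scale_right_distrib il mult.assoc)
    also have "\<dots> = P (mul u y) + P (P y) - P y"
    proof -
      have p1: "P (mul u y) = scale (il * il) (R (mul a y))"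
        unfolding P_def u_def a_def by (simp only: mL R_scale V.scale_scale) simp
      have p2: "P (P y) = scale (il * il) (R (R y))"
        unfolding P_def by (simp only: R_scale V.scale_scale) simp
      have p3: "P y = - scale il (R y)" by (simp add: P_def)
      show ?thesis by (simp only: p1 p2) (simp add: P_def)
    qed
    finally show ?thesis .
  qed
  have PA: "P (x + y) = P x + P y" for x y by (simp add: P_def R_add V.scale_right_distrib)
  have PS: "P (scale c x) = scale c (P x)" for c x
    unfolding P_def by (simp only: R_scale V.scale_scale mult.commute)
  interpret S: rbsetup scale mul one P u
    by (unfold_locales) (simp_all only: assms(2,3) PA PS u_def[symmetric] relP V.scale_right_distrib
       V.scale_left_distrib V.scale_scale V.scale_one)
  obtain n where n: "n \<ge> 1" "apow mul a n = 0"
    using assms(7) by (auto simp: nilpotent_elt_def a_def)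
  then obtain m where nm: "n = Suc m" by (cases n) auto
  have "apow mul u n = 0"
    using apow_scale[OF assms(1,2), of "- il" a m] n nm by (simp add: u_def P_def a_def)
  then have "u = 0" using S.nil_zero n(1) by blast
  then have R1: "R one = 0" using il by (auto simp: u_def P_def)
  have RR: "R (R x) = scale (- lam) (R x)" for x
  proof -
    have "mul (R x) (R one) = R (R x + scale lam x)"
      using RB[of x one] by (simp add: un R1 m0R)
    then have "R (R x) + scale lam (R x) = 0" by (simp add: R1 m0R R_add R_scale)
    then show ?thesis by (simp add: eq_neg_iff_add_eq_0)
  qed
  define A1 where "A1 = {x. R x = 0}"
  define A2 where "A2 = {x. R x = scale (- lam) x}"
  have s1: "subalg scale mul A1"
    unfolding subalg_def V.subspace_def A1_def
  proof (intro conjI ballI allI)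
    fix x y assume x: "x \<in> {x. R x = 0}" and y: "y \<in> {x. R x = 0}"
    have "0 = R (scale lam (mul x y))" using RB[of x y] x y by (simp add: m0R m0L)
    then show "mul x y \<in> {x. R x = 0}" using assms(6) by (simp add: R_scale)
  qed (auto simp: R_zero R_add R_scale)
  have s2: "subalg scale mul A2"
    unfolding subalg_def V.subspace_def A2_def
  proof (intro conjI ballI allI)
    fix x y assume x: "x \<in> {x. R x = scale (- lam) x}" and y: "y \<in> {x. R x = scale (- lam) x}"
    have "scale (lam * lam) (mul x y) = R (scale (- lam) (mul x y))"
      using RB[of x y] x y by (simp add: mL mR mNL mNR algebra_simps)
    then have "scale (- lam) (R (mul x y)) = scale (- lam) (scale (- lam) (mul x y))"
      by (simp add: R_scale R_neg)
    moreover have "- lam \<noteq> 0" using assms(6) by simp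
    ultimately have "R (mul x y) = scale (- lam) (mul x y)"
      using V.scale_cancel_left[of "- lam" "R (mul x y)" "scale (- lam) (mul x y)"] by blast
    then show "mul x y \<in> {x. R x = scale (- lam) x}" by simp
  qed (auto simp: R_zero R_add R_scale V.scale_right_distrib V.scale_left_commute)
  have "A1 \<inter> A2 = {0}"
    using assms(6) by (auto simp: A1_def A2_def R_zero)
  moreover have "\<exists>a1\<in>A1. \<exists>a2\<in>A2. v = a1 + a2" for v
  proof (intro bexI)
    show "v = (v + scale il (R v)) + scale (- il) (R v)" by (simp add: algebra_simps)
    show "v + scale il (R v) \<in> A1" by (simp add: A1_def R_add R_scale RR il)
    show "scale (- il) (R v) \<in> A2" by (simp add: A2_def R_scale R_neg RR il mult.commute)
  qed
  moreover have "\<forall>a1\<in>A1. \<forall>a2\<in>A2. R (a1 + a2) = scale (- lam) a2"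
    by (simp add: A1_def A2_def R_add)
  ultimately have "splitting_rb scale mul lam R"
    unfolding splitting_rb_def using s1 s2 by blast
  with R1 show ?thesis by simp
qed

end
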